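(* For every $\tau\in\mathbb{H}^2$, with theta constants evaluated at $(0,\tau)$, $$\theta^3\begin{bmatrix}1\\ 0\end{bmatrix}\theta\begin{bmatrix}1\\ \frac23\end{bmatrix}-\theta^4\begin{bmatrix}1\\ \frac13\end{bmatrix}+\theta^4\begin{bmatrix}1\\ \frac23\end{bmatrix}=0.$$
   Context: $\mathbb{H}^2$ is the upper half-plane. For $\epsilon,\epsilon'\in\mathbb{R}$, $\theta\begin{bmatrix}\epsilon\\ \epsilon'\end{bmatrix}(\zeta,\tau)=\sum_{n\in\mathbb{Z}}\exp\!\Big(2\pi i\Big[\tfrac12\big(n+\tfrac{\epsilon}{2}\big)^2\tau+\big(n+\tfrac{\epsilon}{2}\big)\big(\zeta+\tfrac{\epsilon'}{2}\big)\Big]\Big)$; $\theta\begin{bmatrix}\epsilon\\ \epsilon'\end{bmatrix}$ without argument means the value at $(0,\tau)$, and $\theta^k$ is the $k$-th power. *)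

theory Defs
  imports "HOL-Analysis.Analysis"
begin

definition theta :: "real \<Rightarrow> real \<Rightarrow> complex \<Rightarrow> complex \<Rightarrow> complex" where
  "theta eps eps' zeta tau =
     (\<Sum>\<^sub>\<infinity>n::int. exp (2 * pi * \<i> *
        ((1/2) * (of_int n + of_real eps / 2)^2 * tau
         + (of_int n + of_real eps / 2) * (zeta + of_real eps' / 2))))"

definition theta_const :: "real \<Rightarrow> real \<Rightarrow> complex \<Rightarrow> complex" where
  "theta_const eps eps' tau = theta eps eps' 0 tau"

end

theory Submission
  imports Defs
begin


lemma prod_infsum:
  fixes f :: "'a \<Rightarrow> complex" and g :: "'b \<Rightarrow> complex"
  assumes f: "f summable_on A" and g: "g summable_on B"
  shows "(\<lambda>(x,y). f x * g y) summable_on (A \<times> B)"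
    and "infsum f A * infsum g B = infsum (\<lambda>(x,y). f x * g y) (A \<times> B)"
proof -
  have fa: "(\<lambda>x. norm (f x)) summable_on A" and ga: "(\<lambda>x. norm (g x)) summable_on B"
    using f g summable_on_iff_abs_summable_on_complex by auto
  have "(\<lambda>z. norm ((\<lambda>(x,y). f x * g y) z)) summable_on (A \<times> B)"
  proof (rule iffD2[OF Infinite_Sum.abs_summable_on_Sigma_iff], intro conjI ballI)
    fix x assume "x \<in> A"
    show "(\<lambda>y. norm (case (x, y) of (x, y) \<Rightarrow> f x * g y)) summable_on B"
      using summable_on_cmult_right[OF ga, of "norm (f x)"] by (simp add: norm_mult)
  next
    have "(\<lambda>x. infsum (\<lambda>y. norm (case (x, y) of (x, y) \<Rightarrow> f x * g y)) B)
        = (\<lambda>x. norm (f x) * infsum (\<lambda>y. norm (g y)) B)"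
      by (simp add: norm_mult infsum_cmult_right')
    moreover have "(\<lambda>x. norm (norm (f x) * infsum (\<lambda>y. norm (g y)) B)) summable_on A"
      using summable_on_cmult_left[OF fa, of "infsum (\<lambda>y. norm (g y)) B"]
      by (simp add: norm_mult infsum_nonneg)
    ultimately show "(\<lambda>x. norm (infsum (\<lambda>y. norm (case (x, y) of (x, y) \<Rightarrow> f x * g y)) B)) summable_on A"
      by (simp add: norm_mult infsum_cmult_right')
  qed
  then show S: "(\<lambda>(x,y). f x * g y) summable_on (A \<times> B)"
    using summable_on_iff_abs_summable_on_complex by blast
  have "infsum (\<lambda>(x,y). f x * g y) (A \<times> B) = infsum (\<lambda>x. infsum (\<lambda>y. f x * g y) B) A"
    using infsum_Sigma'_banach[of "\<lambda>x y. f x * g y" A "\<lambda>_. B"] S by simp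
  also have "\<dots> = infsum (\<lambda>x. f x * infsum g B) A"
    by (simp add: infsum_cmult_right')
  also have "\<dots> = infsum f A * infsum g B"
    by (simp add: infsum_cmult_left')
  finally show "infsum f A * infsum g B = infsum (\<lambda>(x,y). f x * g y) (A \<times> B)" by simp
qed

lemma geom_int_summable:
  fixes r :: real assumes r: "0 \<le> r" "r < 1"
  shows "(\<lambda>m::int. r ^ nat \<bar>m\<bar>) summable_on UNIV"
proof -
  have s1: "(\<lambda>n::nat. r ^ n) summable_on UNIV"
    by (rule norm_summable_imp_summable_on) (use r in \<open>simp add: summable_geometric\<close>)
  have s2: "(\<lambda>n::nat. r ^ Suc n) summable_on UNIV"
    by (rule norm_summable_imp_summable_on) (use r in \<open>simp add: summable_geometric summable_mult\<close>)
  have a: "(\<lambda>m::int. r ^ nat \<bar>m\<bar>) summable_on (of_nat ` UNIV)"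
    by (subst summable_on_reindex) (auto simp: inj_on_def o_def s1)
  have b: "(\<lambda>m::int. r ^ nat \<bar>m\<bar>) summable_on ((\<lambda>n. - int n - 1) ` UNIV)"
  proof (subst summable_on_reindex)
    show "inj_on (\<lambda>n. - int n - 1) UNIV" by (auto simp: inj_on_def)
    have "((\<lambda>m::int. r ^ nat \<bar>m\<bar>) \<circ> (\<lambda>n. - int n - 1)) = (\<lambda>n. r ^ Suc n)"
      by (auto simp: o_def nat_add_distrib)
    then show "((\<lambda>m::int. r ^ nat \<bar>m\<bar>) \<circ> (\<lambda>n. - int n - 1)) summable_on UNIV" using s2 by simp
  qed
  have U: "(UNIV::int set) = of_nat ` UNIV \<union> (\<lambda>n. - int n - 1) ` UNIV"
  proof -
    { fix m :: int
      have "m \<in> of_nat ` UNIV \<union> (\<lambda>n. - int n - 1) ` UNIV"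
      proof (cases "m \<ge> 0")
        case True then show ?thesis by (auto intro!: image_eqI[of _ _ "nat m"])
      next
        case False then show ?thesis by (auto intro!: image_eqI[of _ _ "nat (-m-1)"])
      qed }
    then show ?thesis by auto
  qed
  show ?thesis
    by (subst U, rule summable_on_Un_disjoint[OF a b]) auto
qed




definition ww :: "complex \<Rightarrow> int \<Rightarrow> complex" where
  "ww t m = exp (pi * \<i> * t * (of_int m)^2 / 4)"
definition ff :: "complex \<Rightarrow> real \<Rightarrow> int \<Rightarrow> complex" where
  "ff t e m = ww t m * exp (pi * \<i> * of_int m * of_real e / 2)"

lemma norm_ww: "norm (ww t m) = exp (- (pi * Im t / 4) * real_of_int (m^2))"
  by (simp add: ww_def)

lemma norm_ff: "norm (ff t e m) = norm (ww t m)"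
  by (simp add: ff_def norm_mult)

lemma abs_le_sq: "\<bar>m::int\<bar> \<le> m^2"
proof (cases "m = 0")
  case False
  then have "1 \<le> \<bar>m\<bar>" by simp
  then have "\<bar>m\<bar> * 1 \<le> \<bar>m\<bar> * \<bar>m\<bar>" by (intro mult_left_mono) auto
  then show ?thesis by (simp add: power2_eq_square abs_mult[symmetric])
qed simp

lemma ww_summable:
  assumes "Im t > 0" shows "ww t summable_on UNIV"
proof -
  define c where "c = pi * Im t / 4"
  have c: "c > 0" using assms by (simp add: c_def)
  have g: "(\<lambda>m::int. exp (-c) ^ nat \<bar>m\<bar>) summable_on UNIV"
    by (rule geom_int_summable) (use c in auto)
  have "(\<lambda>m. norm (ww t m)) summable_on UNIV"
  proof (rule summable_on_comparison_test[OF g])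
    fix m :: int
    have "norm (ww t m) = exp (- c * real_of_int (m^2))" by (simp add: norm_ww c_def)
    also have "\<dots> \<le> exp (- c * real_of_int \<bar>m\<bar>)"
    proof -
      have h: "real_of_int \<bar>m\<bar> \<le> real_of_int (m^2)"
        by (subst of_int_le_iff) (rule abs_le_sq)
      have "- c * real_of_int (m^2) \<le> - c * real_of_int \<bar>m\<bar>"
        using h c by (intro mult_left_mono_neg) auto
      then show ?thesis by (simp only: exp_le_cancel_iff)
    qed
    also have "\<dots> = exp (-c) ^ nat \<bar>m\<bar>"
      by (subst exp_of_nat2_mult[symmetric]) (simp add: mult.commute)
    finally show "norm (ww t m) \<le> exp (-c) ^ nat \<bar>m\<bar>" .
  qed auto
  then show ?thesis using summable_on_iff_abs_summable_on_complex by blast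
qed

lemma ff_summable:
  assumes "Im t > 0" shows "ff t e summable_on A"
proof -
  have "(\<lambda>m. norm (ww t m)) summable_on UNIV"
    using ww_summable[OF assms] summable_on_iff_abs_summable_on_complex by blast
  then have "(\<lambda>m. norm (ff t e m)) summable_on UNIV" by (simp add: norm_ff)
  then have "ff t e summable_on UNIV" using summable_on_iff_abs_summable_on_complex by blast
  then show ?thesis by (rule summable_on_subset_banach) auto
qed

lemma theta_odd:
  "theta_const 1 e t = infsum (ff t e) {m. odd m}"
proof -
  have b: "bij_betw (\<lambda>n::int. 2*n+1) UNIV {m. odd m}"
  proof (rule bij_betwI[where g = "\<lambda>m. m div 2"])
    show "(\<lambda>n::int. 2*n+1) \<in> UNIV \<rightarrow> {m. odd m}" by auto
  qed (auto elim!: oddE)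
  have "theta_const 1 e t = infsum (\<lambda>n::int. ff t e (2*n+1)) UNIV"
    unfolding theta_const_def theta_def
  proof (rule infsum_cong)
    fix n :: int
    show "exp (2 * pi * \<i> * ((1/2) * (of_int n + of_real 1 / 2)^2 * t
         + (of_int n + of_real 1 / 2) * (0 + of_real e / 2))) = ff t e (2*n+1)"
      unfolding ff_def ww_def exp_add[symmetric]
      by (rule arg_cong[where f=exp]) (simp add: field_simps power2_eq_square)
  qed
  also have "\<dots> = infsum (ff t e) {m. odd m}"
    by (rule infsum_reindex_bij_betw[OF b])
  finally show ?thesis .
qed




definition O4 :: "(int \<times> int \<times> int \<times> int) set" where
  "O4 = {m. odd m} \<times> {m. odd m} \<times> {m. odd m} \<times> {m. odd m}"

fun nrm :: "int \<times> int \<times> int \<times> int \<Rightarrow> int" where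
  "nrm (a,b,c,d) = a^2+b^2+c^2+d^2"

fun ssum :: "int \<times> int \<times> int \<times> int \<Rightarrow> int" where
  "ssum (a,b,c,d) = a+b+c+d"

fun HT :: "int \<times> int \<times> int \<times> int \<Rightarrow> int \<times> int \<times> int \<times> int" where
  "HT (a,b,c,d) = ((a+b+c+d) div 2, (a+b-c-d) div 2, (a-b+c-d) div 2, (a-b-c+d) div 2)"

lemma HT_explicit:
  "HT (2*a+1, 2*b+1, 2*c+1, 2*d+1) = (a+b+c+d+2, a+b-c-d, a-b+c-d, a-b-c+d)"
proof -
  have 1: "2*a+1 + (2*b+1) + (2*c+1) + (2*d+1) = 2*(a+b+c+d+2)" by simp
  have 2: "2*a+1 + (2*b+1) - (2*c+1) - (2*d+1) = 2*(a+b-c-d)" by simp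
  have 3: "2*a+1 - (2*b+1) + (2*c+1) - (2*d+1) = 2*(a-b+c-d)" by simp
  have 4: "2*a+1 - (2*b+1) - (2*c+1) + (2*d+1) = 2*(a-b-c+d)" by simp
  show ?thesis by (simp only: HT.simps 1 2 3 4) simp
qed

lemma O4E:
  assumes "m \<in> O4"
  obtains a b c d where "m = (2*a+1, 2*b+1, 2*c+1, 2*d+1)"
proof -
  obtain a b c d where m: "m = (a,b,c,d)" by (cases m) auto
  have "odd a" "odd b" "odd c" "odd d" using assms m by (auto simp: O4_def)
  then show ?thesis using that m by (auto elim!: oddE)
qed

lemma HT_inv: "m \<in> O4 \<Longrightarrow> HT (HT m) = m"
proof -
  assume "m \<in> O4"
  then obtain a b c d where m: "m = (2*a+1, 2*b+1, 2*c+1, 2*d+1)" by (rule O4E)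
  have 1: "a+b+c+d+2 + (a+b-c-d) + (a-b+c-d) + (a-b-c+d) = 2*(2*a+1)" by simp
  have 2: "a+b+c+d+2 + (a+b-c-d) - (a-b+c-d) - (a-b-c+d) = 2*(2*b+1)" by simp
  have 3: "a+b+c+d+2 - (a+b-c-d) + (a-b+c-d) - (a-b-c+d) = 2*(2*c+1)" by simp
  have 4: "a+b+c+d+2 - (a+b-c-d) - (a-b+c-d) + (a-b-c+d) = 2*(2*d+1)" by simp
  show ?thesis unfolding m HT_explicit by (simp only: HT.simps 1 2 3 4) simp
qed

lemma HT_nrm: "m \<in> O4 \<Longrightarrow> nrm (HT m) = nrm m"
proof -
  assume "m \<in> O4"
  then obtain a b c d where m: "m = (2*a+1, 2*b+1, 2*c+1, 2*d+1)" by (rule O4E)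
  show ?thesis unfolding m HT_explicit by (simp add: power2_eq_square algebra_simps)
qed

lemma HT_O4: "k \<in> O4 \<Longrightarrow> ssum k mod 4 = 2 \<Longrightarrow> HT k \<in> O4"
proof -
  assume k: "k \<in> O4" "ssum k mod 4 = 2"
  obtain a b c d where m: "k = (2*a+1, 2*b+1, 2*c+1, 2*d+1)" using k(1) by (rule O4E)
  from k(2) have "(a+b+c+d) mod 2 = 1" unfolding m by simp presburger
  then show ?thesis unfolding m HT_explicit O4_def by simp presburger
qed

definition Yodd :: "(int \<times> int \<times> int \<times> int) set" where
  "Yodd = {k \<in> O4. ssum k mod 4 = 2}"
definition Z0 :: "(int \<times> int \<times> int \<times> int) set" where
  "Z0 = {k \<in> O4. ssum k mod 4 = 0}"

lemma Yodd_sub: "Yodd \<subseteq> HT ` O4"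
proof
  fix k assume "k \<in> Yodd"
  then have k: "k \<in> O4" "ssum k mod 4 = 2" by (auto simp: Yodd_def)
  then show "k \<in> HT ` O4" using HT_O4 HT_inv by (metis image_eqI)
qed

lemma Y_odd: "k \<in> HT ` O4 \<Longrightarrow> odd (fst k) \<Longrightarrow> k \<in> Yodd"
proof -
  assume "k \<in> HT ` O4" and o: "odd (fst k)"
  then obtain m where "m \<in> O4" "k = HT m" by auto
  then obtain a b c d where k: "k = HT (2*a+1, 2*b+1, 2*c+1, 2*d+1)" by (metis O4E)
  show ?thesis using o unfolding k HT_explicit Yodd_def O4_def by simp
qed

lemma O4_split: "O4 = Yodd \<union> Z0" "Yodd \<inter> Z0 = {}"
proof -
  show "Yodd \<inter> Z0 = {}" by (auto simp: Yodd_def Z0_def)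
  { fix k assume "k \<in> O4"
    then obtain a b c d where k: "k = (2*a+1, 2*b+1, 2*c+1, 2*d+1)" by (rule O4E)
    have "ssum k mod 4 = 2 \<or> ssum k mod 4 = 0" unfolding k by simp presburger }
  then show "O4 = Yodd \<union> Z0" by (auto simp: Yodd_def Z0_def)
qed

fun flip :: "int \<times> int \<times> int \<times> int \<Rightarrow> int \<times> int \<times> int \<times> int" where
  "flip (a,b,c,d) = (a,-b,c,d)"

lemma flip_bij: "bij_betw flip Yodd Z0"
proof (rule bij_betwI[where g = flip])
  have *: "ssum (flip k) mod 4 = 2" if h: "k \<in> O4" "ssum k mod 4 = 0" for k
  proof -
    obtain a b c d where k: "k = (2*a+1, 2*b+1, 2*c+1, 2*d+1)" using h(1) by (rule O4E)
    show ?thesis using h(2) unfolding k by simp presburger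
  qed
  have **: "ssum (flip k) mod 4 = 0" if h: "k \<in> O4" "ssum k mod 4 = 2" for k
  proof -
    obtain a b c d where k: "k = (2*a+1, 2*b+1, 2*c+1, 2*d+1)" using h(1) by (rule O4E)
    show ?thesis using h(2) unfolding k by simp presburger
  qed
  have f: "flip k \<in> O4" if "k \<in> O4" for k using that by (cases k) (auto simp: O4_def)
  show "flip \<in> Yodd \<rightarrow> Z0" using ** f by (auto simp: Yodd_def Z0_def)
  show "flip \<in> Z0 \<rightarrow> Yodd" using * f by (auto simp: Yodd_def Z0_def)
  show "flip (flip x) = x" for x by (cases x) auto
  show "flip (flip y) = y" for y by (cases y) auto
qed

lemma HT_bij: "bij_betw HT (HT ` O4) O4"
proof (rule bij_betwI[where g = HT])
  show "HT \<in> HT ` O4 \<rightarrow> O4" using HT_inv by auto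
  show "HT \<in> O4 \<rightarrow> HT ` O4" by auto
  show "HT (HT x) = x" if "x \<in> HT ` O4" for x using that HT_inv by auto
  show "HT (HT y) = y" if "y \<in> O4" for y using that HT_inv by auto
qed




definition WW :: "complex \<Rightarrow> int \<times> int \<times> int \<times> int \<Rightarrow> complex" where
  "WW t k = exp (pi * \<i> * t * of_int (nrm k) / 4)"

fun chr :: "real \<Rightarrow> real \<Rightarrow> real \<Rightarrow> real \<Rightarrow> int \<times> int \<times> int \<times> int \<Rightarrow> complex" where
  "chr e1 e2 e3 e4 (a,b,c,d) = exp (pi * \<i> * (of_int a * of_real e1 + of_int b * of_real e2
       + of_int c * of_real e3 + of_int d * of_real e4) / 2)"

lemma mult_exp_exp2: "exp (x::complex) * (exp y * z) = exp (x + y) * z"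
  by (simp add: exp_add mult.assoc)

lemma ff4: "ff t e1 a * (ff t e2 b * (ff t e3 c * ff t e4 d)) = WW t (a,b,c,d) * chr e1 e2 e3 e4 (a,b,c,d)"
proof -
  have "ff t e1 a * (ff t e2 b * (ff t e3 c * ff t e4 d)) =
     exp (pi * \<i> * t * (of_int a)^2 / 4 + pi * \<i> * of_int a * of_real e1 / 2 +
          (pi * \<i> * t * (of_int b)^2 / 4 + pi * \<i> * of_int b * of_real e2 / 2) +
          (pi * \<i> * t * (of_int c)^2 / 4 + pi * \<i> * of_int c * of_real e3 / 2) +
          (pi * \<i> * t * (of_int d)^2 / 4 + pi * \<i> * of_int d * of_real e4 / 2))"
    by (simp add: ff_def ww_def exp_add mult_ac)
  also have "\<dots> = exp (pi * \<i> * t * of_int (nrm (a,b,c,d)) / 4 + pi * \<i> * (of_int a * of_real e1 + of_int b * of_real e2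
       + of_int c * of_real e3 + of_int d * of_real e4) / 2)"
    by (rule arg_cong[where f=exp]) (simp add: field_simps)
  also have "\<dots> = WW t (a,b,c,d) * chr e1 e2 e3 e4 (a,b,c,d)"
    by (simp add: WW_def exp_add)
  finally show ?thesis .
qed

lemma prod4:
  assumes t: "Im t > 0"
  shows "(\<lambda>k. WW t k * chr e1 e2 e3 e4 k) summable_on O4"
    and "theta_const 1 e1 t * (theta_const 1 e2 t * (theta_const 1 e3 t * theta_const 1 e4 t))
         = infsum (\<lambda>k. WW t k * chr e1 e2 e3 e4 k) O4"
proof -
  let ?O = "{m::int. odd m}"
  note s34 = prod_infsum[OF ff_summable[OF t, of e3 ?O] ff_summable[OF t, of e4 ?O]]
  note s234 = prod_infsum[OF ff_summable[OF t, of e2 ?O] s34(1)]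
  note s1234 = prod_infsum[OF ff_summable[OF t, of e1 ?O] s234(1)]
  have eq: "(\<lambda>(x, y). ff t e1 x * (case y of (x, y) \<Rightarrow> ff t e2 x * (case y of (x, y) \<Rightarrow> ff t e3 x * ff t e4 y)))
       = (\<lambda>k. WW t k * chr e1 e2 e3 e4 k)"
    by (auto simp: ff4 fun_eq_iff)
  have O4: "?O \<times> ?O \<times> ?O \<times> ?O = O4" by (simp add: O4_def)
  show "(\<lambda>k. WW t k * chr e1 e2 e3 e4 k) summable_on O4"
    using s1234(1) unfolding eq O4 .
  show "theta_const 1 e1 t * (theta_const 1 e2 t * (theta_const 1 e3 t * theta_const 1 e4 t))
         = infsum (\<lambda>k. WW t k * chr e1 e2 e3 e4 k) O4"
    unfolding theta_odd s34(2) s234(2) s1234(2) eq O4 ..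
qed

lemma summable_bounded_mult:
  fixes W h :: "'a \<Rightarrow> complex"
  assumes "W summable_on S" "\<And>x. x \<in> S \<Longrightarrow> norm (h x) \<le> K"
  shows "(\<lambda>x. W x * h x) summable_on S"
proof -
  have "(\<lambda>x. norm (W x)) summable_on S" using assms(1) summable_on_iff_abs_summable_on_complex by blast
  then have "(\<lambda>x. norm (W x) * K) summable_on S" by (rule summable_on_cmult_left)
  then have "(\<lambda>x. norm (W x * h x)) summable_on S"
    by (rule summable_on_comparison_test) (auto simp: norm_mult intro!: mult_left_mono assms(2))
  then show ?thesis using summable_on_iff_abs_summable_on_complex by blast
qed

lemma infsum_re:
  fixes W h :: "'a \<Rightarrow> complex"
  assumes g: "bij_betw g S S" and W: "W summable_on S"
    and Wg: "\<And>x. x \<in> S \<Longrightarrow> W (g x) = W x"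
    and hg: "\<And>x. x \<in> S \<Longrightarrow> h (g x) = cnj (h x)"
    and hK: "\<And>x. x \<in> S \<Longrightarrow> norm (h x) \<le> K"
  shows "infsum (\<lambda>x. W x * h x) S = infsum (\<lambda>x. W x * of_real (Re (h x))) S"
proof -
  have s1: "(\<lambda>x. W x * h x) summable_on S" by (rule summable_bounded_mult[OF W hK])
  have s2: "(\<lambda>x. W x * cnj (h x)) summable_on S" by (rule summable_bounded_mult[OF W]) (use hK in auto)
  have I: "infsum (\<lambda>x. W x * h x) S = infsum (\<lambda>x. W x * cnj (h x)) S"
  proof -
    have "infsum (\<lambda>x. W x * h x) S = infsum (\<lambda>x. W (g x) * h (g x)) S"
      by (rule infsum_reindex_bij_betw[OF g, symmetric])
    also have "\<dots> = infsum (\<lambda>x. W x * cnj (h x)) S"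
      by (rule infsum_cong) (simp add: Wg hg)
    finally show ?thesis .
  qed
  have "infsum (\<lambda>x. W x * of_real (Re (h x))) S = infsum (\<lambda>x. (W x * h x + W x * cnj (h x)) * (1/2)) S"
  proof (rule infsum_cong)
    fix x
    have "h x + cnj (h x) = of_real (2 * Re (h x))" by (rule complex_add_cnj)
    then show "W x * of_real (Re (h x)) = (W x * h x + W x * cnj (h x)) * (1/2)"
      by (simp add: distrib_left[symmetric])
  qed
  also have "\<dots> = (infsum (\<lambda>x. W x * h x) S + infsum (\<lambda>x. W x * cnj (h x)) S) * (1/2)"
    by (subst infsum_cmult_left', subst infsum_add[OF s1 s2], rule refl)
  also have "\<dots> = infsum (\<lambda>x. W x * h x) S" by (simp add: I[symmetric])
  finally show ?thesis by simp
qed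




fun neg4 :: "int \<times> int \<times> int \<times> int \<Rightarrow> int \<times> int \<times> int \<times> int" where
  "neg4 (a,b,c,d) = (-a,-b,-c,-d)"
fun swp :: "int \<times> int \<times> int \<times> int \<Rightarrow> int \<times> int \<times> int \<times> int" where
  "swp (a,b,c,d) = (d,b,c,a)"

lemma neg4_bij: "bij_betw neg4 O4 O4"
  by (rule bij_betwI[where g = neg4]) (auto simp: O4_def)

lemma swp_bij: "bij_betw swp O4 O4"
  by (rule bij_betwI[where g = swp]) (auto simp: O4_def)

lemma WW_neg4: "WW t (neg4 k) = WW t k" by (cases k) (simp add: WW_def)
lemma WW_swp: "WW t (swp k) = WW t k" by (cases k) (simp add: WW_def algebra_simps)
lemma WW_flip: "WW t (flip k) = WW t k" by (cases k) (simp add: WW_def)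

definition cc :: "int \<Rightarrow> complex" where
  "cc j = of_real (cos (pi * of_int j / 3) - cos (2 * pi * of_int j / 3))"

lemma cc_even: "even j \<Longrightarrow> cc j = 0"
proof -
  assume "even j" then obtain i where j: "j = 2*i" by (rule evenE)
  have "2 * pi * of_int j / 3 = (2*pi) * of_int i - pi * of_int j / 3" by (simp add: j field_simps)
  then have "cos (2 * pi * of_int j / 3) = cos ((2*pi) * of_int i - pi * of_int j / 3)"
    by (simp only:)
  also have "\<dots> = cos (pi * of_int j / 3)"
    by (simp only: cos_diff cos_int_2pin sin_int_2pin)
  finally have "cos (2 * pi * of_int j / 3) = cos (pi * of_int j / 3)" .
  then show ?thesis by (simp add: cc_def)
qed

lemma cos_odd: "odd j \<Longrightarrow> of_real (cos (pi * of_int j / 3)) = cc j / 2"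
proof -
  assume o: "odd j"
  have "2 * pi * of_int j / 3 = pi * of_int j - pi * of_int j / 3" by (simp add: field_simps)
  then have "cos (2 * pi * of_int j / 3) = cos (pi * of_int j - pi * of_int j / 3)"
    by (simp only:)
  also have "\<dots> = - cos (pi * of_int j / 3)"
    using o by (simp only: cos_diff cos_npi_int sin_npi_int) simp
  finally have "cos (2 * pi * of_int j / 3) = - cos (pi * of_int j / 3)" .
  then show ?thesis by (simp add: cc_def)
qed

lemma norm_cc: "norm (cc j) \<le> 2"
proof -
  have "\<bar>cos (pi * of_int j / 3) - cos (2 * pi * of_int j / 3)\<bar> \<le> 2"
    using cos_le_one[of "pi * of_int j / 3"] cos_ge_minus_one[of "pi * of_int j / 3"]
      cos_le_one[of "2 * pi * of_int j / 3"] cos_ge_minus_one[of "2 * pi * of_int j / 3"]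
    by linarith
  then show ?thesis by (simp only: cc_def norm_of_real)
qed

lemma fst_HT: "fst (HT m) = ssum m div 2" by (cases m) simp



lemma main_identity:
  fixes tau :: complex
  assumes t: "Im tau > 0"
  shows "(theta_const 1 0 tau)^3 * theta_const 1 (2/3) tau
           - (theta_const 1 (1/3) tau)^4 + (theta_const 1 (2/3) tau)^4 = 0"
proof -
  define A where "A = theta_const 1 0 tau"
  define B where "B = theta_const 1 (2/3) tau"
  define C where "C = theta_const 1 (1/3) tau"
  define W where "W = WW tau"
  have Wsum: "W summable_on O4"
  proof -
    have "(\<lambda>k. WW tau k * chr 0 0 0 0 k) summable_on O4" by (rule prod4(1)[OF t])
    moreover have "(\<lambda>k. WW tau k * chr 0 0 0 0 k) = W" by (auto simp: fun_eq_iff W_def)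
    ultimately show ?thesis by simp
  qed
  define G where "G = (\<lambda>k. W k * cc (fst k))"
  have Gsum: "G summable_on S" if "S \<subseteq> O4" for S
  proof -
    have "G summable_on O4" unfolding G_def
      by (rule summable_bounded_mult[OF Wsum, where K = 2]) (rule norm_cc)
    then show ?thesis using that summable_on_subset_banach by blast
  qed
  have AB: "A^3 * B = infsum G O4 / 2"
  proof -
    have "A^3 * B = A * (A * (A * B))" by (simp add: power3_eq_cube mult_ac)
    also have "\<dots> = infsum (\<lambda>k. WW tau k * chr 0 0 0 (2/3) k) O4"
      unfolding A_def B_def by (rule prod4(2)[OF t])
    also have "\<dots> = infsum (\<lambda>k. W k * exp (pi * \<i> * of_int (snd (snd (snd k))) / 3)) O4"
    proof (rule infsum_cong)
      fix k :: "int \<times> int \<times> int \<times> int"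
      obtain a b c d where k: "k = (a,b,c,d)" by (cases k) auto
      have "pi * \<i> * (of_int a * of_real 0 + of_int b * of_real 0 + of_int c * of_real 0 + of_int d * of_real (2/3)) / 2
          = pi * \<i> * of_int d / 3"
        by (simp only: of_real_0 mult_zero_right add_0 of_real_divide of_real_numeral) (simp add: field_simps)
      then show "WW tau k * chr 0 0 0 (2/3) k = W k * exp (pi * \<i> * of_int (snd (snd (snd k))) / 3)"
        unfolding k chr.simps W_def by (simp only: snd_conv)
    qed
    also have "\<dots> = infsum (\<lambda>k. W k * of_real (Re (exp (pi * \<i> * of_int (snd (snd (snd k))) / 3)))) O4"
    proof (rule infsum_re[OF neg4_bij Wsum, where K = 1])
      fix k :: "int \<times> int \<times> int \<times> int"
      obtain a b c d where k: "k = (a,b,c,d)" by (cases k) auto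
      show "W (neg4 k) = W k" by (simp add: W_def WW_neg4)
      show "exp (pi * \<i> * of_int (snd (snd (snd (neg4 k)))) / 3) = cnj (exp (pi * \<i> * of_int (snd (snd (snd k))) / 3))"
        unfolding k by (simp add: exp_cnj)
      show "norm (exp (pi * \<i> * of_int (snd (snd (snd k))) / 3)) \<le> 1" by simp
    qed
    also have "\<dots> = infsum (\<lambda>k. W k * of_real (cos (pi * of_int (snd (snd (snd k))) / 3))) O4"
      by (rule infsum_cong) (simp add: Re_exp)
    also have "\<dots> = infsum (\<lambda>k. W (swp k) * of_real (cos (pi * of_int (snd (snd (snd (swp k)))) / 3))) O4"
      by (rule infsum_reindex_bij_betw[OF swp_bij, symmetric])
    also have "\<dots> = infsum (\<lambda>k. G k / 2) O4"
    proof (rule infsum_cong)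
      fix k show "k \<in> O4 \<Longrightarrow> W (swp k) * of_real (cos (pi * of_int (snd (snd (snd (swp k)))) / 3)) = G k / 2"
      proof -
        assume "k \<in> O4"
        obtain a b c d where k: "k = (a,b,c,d)" by (cases k) auto
        have "odd a" using \<open>k \<in> O4\<close> k by (simp add: O4_def)
        have "W (swp k) = W k" by (simp add: W_def WW_swp)
        then show ?thesis unfolding k using cos_odd[OF \<open>odd a\<close>] by (simp add: G_def)
      qed
    qed
    also have "\<dots> = infsum G O4 / 2" by (simp only: infsum_cmult_left' divide_inverse)
    finally show ?thesis .
  qed
  have CB: "C^4 - B^4 = infsum G Yodd"
  proof -
    define hC where "hC = (\<lambda>k. exp (pi * \<i> * of_int (ssum k) / 6))"
    define hB where "hB = (\<lambda>k. exp (pi * \<i> * of_int (ssum k) / 3))"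
    have "C^4 = C * (C * (C * C))" by (simp add: power4_eq_xxxx mult_ac)
    also have "\<dots> = infsum (\<lambda>k. WW tau k * chr (1/3) (1/3) (1/3) (1/3) k) O4"
      unfolding C_def by (rule prod4(2)[OF t])
    also have "\<dots> = infsum (\<lambda>k. W k * hC k) O4"
    proof (rule infsum_cong)
      fix k :: "int \<times> int \<times> int \<times> int"
      obtain a b c d where k: "k = (a,b,c,d)" by (cases k) auto
      have "pi * \<i> * (of_int a * of_real (1/3) + of_int b * of_real (1/3) + of_int c * of_real (1/3) + of_int d * of_real (1/3)) / 2
          = pi * \<i> * of_int (a+b+c+d) / 6"
        by (simp only: of_real_divide of_real_numeral of_real_1 of_int_add) (simp add: field_simps)
      then show "WW tau k * chr (1/3) (1/3) (1/3) (1/3) k = W k * hC k"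
        unfolding k chr.simps W_def hC_def ssum.simps by (simp only:)
    qed
    finally have C4: "C^4 = infsum (\<lambda>k. W k * hC k) O4" .
    have "B^4 = B * (B * (B * B))" by (simp add: power4_eq_xxxx mult_ac)
    also have "\<dots> = infsum (\<lambda>k. WW tau k * chr (2/3) (2/3) (2/3) (2/3) k) O4"
      unfolding B_def by (rule prod4(2)[OF t])
    also have "\<dots> = infsum (\<lambda>k. W k * hB k) O4"
    proof (rule infsum_cong)
      fix k :: "int \<times> int \<times> int \<times> int"
      obtain a b c d where k: "k = (a,b,c,d)" by (cases k) auto
      have "pi * \<i> * (of_int a * of_real (2/3) + of_int b * of_real (2/3) + of_int c * of_real (2/3) + of_int d * of_real (2/3)) / 2
          = pi * \<i> * of_int (a+b+c+d) / 3"
        by (simp only: of_real_divide of_real_numeral of_int_add) (simp add: field_simps)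
      then show "WW tau k * chr (2/3) (2/3) (2/3) (2/3) k = W k * hB k"
        unfolding k chr.simps W_def hB_def ssum.simps by (simp only:)
    qed
    finally have B4: "B^4 = infsum (\<lambda>k. W k * hB k) O4" .
    have sC: "(\<lambda>k. W k * hC k) summable_on O4"
      by (rule summable_bounded_mult[OF Wsum, where K = 1]) (simp add: hC_def)
    have sB: "(\<lambda>k. - (W k * hB k)) summable_on O4"
      by (rule iffD2[OF summable_on_uminus], rule summable_bounded_mult[OF Wsum, where K = 1]) (simp add: hB_def)
    have "C^4 - B^4 = infsum (\<lambda>k. W k * hC k + - (W k * hB k)) O4"
      unfolding C4 B4 infsum_add[OF sC sB] infsum_uminus by simp
    also have "\<dots> = infsum (\<lambda>k. W k * (hC k - hB k)) O4"
      by (rule infsum_cong) (simp add: algebra_simps)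
    also have "\<dots> = infsum (\<lambda>k. W k * of_real (Re (hC k - hB k))) O4"
    proof (rule infsum_re[OF neg4_bij Wsum, where K = 2])
      fix k :: "int \<times> int \<times> int \<times> int"
      obtain a b c d where k: "k = (a,b,c,d)" by (cases k) auto
      show "W (neg4 k) = W k" by (simp add: W_def WW_neg4)
      have "ssum (neg4 k) = - ssum k" unfolding k by simp
      then show "hC (neg4 k) - hB (neg4 k) = cnj (hC k - hB k)"
        unfolding hC_def hB_def by (simp add: exp_cnj)
      have "norm (hC k - hB k) \<le> norm (hC k) + norm (hB k)" by (rule norm_triangle_ineq4)
      then show "norm (hC k - hB k) \<le> 2" by (simp add: hC_def hB_def)
    qed
    also have "\<dots> = infsum (\<lambda>k. W k * cc (ssum k div 2)) O4"
    proof (rule infsum_cong)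
      fix k assume "k \<in> O4"
      then obtain a b c d where k: "k = (2*a+1, 2*b+1, 2*c+1, 2*d+1)" by (rule O4E)
      define n where "n = a+b+c+d+2"
      have e: "ssum k = 2 * n" unfolding k n_def by simp
      have r: "Re (hC k - hB k) = cos (pi * of_int (ssum k) / 6) - cos (pi * of_int (ssum k) / 3)"
        by (simp add: hC_def hB_def Re_exp)
      have 1: "pi * of_int (ssum k) / 6 = pi * of_int n / 3" unfolding e by simp
      have 2: "pi * of_int (ssum k) / 3 = 2 * pi * of_int n / 3" unfolding e by simp
      have "ssum k div 2 = n" unfolding e by simp
      then show "W k * of_real (Re (hC k - hB k)) = W k * cc (ssum k div 2)"
        unfolding r 1 2 cc_def by simp
    qed
    also have "\<dots> = infsum (\<lambda>k. W (HT k) * cc (ssum (HT k) div 2)) (HT ` O4)"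
      by (rule infsum_reindex_bij_betw[OF HT_bij, symmetric])
    also have "\<dots> = infsum G (HT ` O4)"
    proof (rule infsum_cong)
      fix k assume "k \<in> HT ` O4"
      then obtain m where m: "m \<in> O4" "k = HT m" by auto
      have "W (HT k) = W k" using m by (simp add: HT_inv W_def WW_def HT_nrm)
      moreover have "ssum (HT k) div 2 = fst k"
        using m by (simp add: fst_HT[symmetric] HT_inv)
      ultimately show "W (HT k) * cc (ssum (HT k) div 2) = G k" by (simp add: G_def)
    qed
    also have "\<dots> = infsum G Yodd"
    proof (rule infsum_cong_neutral)
      fix k assume "k \<in> HT ` O4 - Yodd"
      then have "even (fst k)" using Y_odd by blast
      then show "G k = 0" by (simp add: G_def cc_even)
    qed (use Yodd_sub in auto)
    finally show ?thesis .
  qed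
  have "infsum G O4 = infsum G Yodd + infsum G Z0"
    by (subst O4_split(1), rule infsum_Un_disjoint[OF Gsum Gsum O4_split(2)])
       (auto simp: Yodd_def Z0_def)
  also have "infsum G Z0 = infsum G Yodd"
  proof -
    have "infsum G Z0 = infsum (\<lambda>k. G (flip k)) Yodd"
      by (rule infsum_reindex_bij_betw[OF flip_bij, symmetric])
    also have "\<dots> = infsum G Yodd"
    proof (rule infsum_cong)
      fix k show "G (flip k) = G k" by (cases k) (simp add: G_def W_def WW_def)
    qed
    finally show ?thesis .
  qed
  finally have "A^3 * B = C^4 - B^4" using AB CB by simp
  then show ?thesis unfolding A_def B_def C_def by simp
qed


theorem mainTheorem7:
  fixes tau :: complex
  assumes "Im tau > 0"
  shows "(theta_const 1 0 tau)^3 * theta_const 1 (2/3) tau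
           - (theta_const 1 (1/3) tau)^4 + (theta_const 1 (2/3) tau)^4 = 0"
  by (rule main_identity[OF assms])

end
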